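(* For each $k\ge 1$ there is a monic polynomial $P_k$ of degree $k$ (with rational coefficients) such that for all $n\ge 2$ the number of $k$-chains of $(\mathsf{Tr}(n),\preccurlyeq)$ equals $$\sum_{i=0}^{k}\mathfrak{z}_i(n,k)=(k+1)^{\,n-(k+1)}\,P_k(n).$$
   Context: A triword of size $n$ is a word $u=u_1\cdots u_n$ with $u_i\in\{0,1,2\}$, $u_1\ne 2$, and such that $u_i=0$ implies $u_j\neq 1$ for all $j>i$; $\mathsf{Tr}(n)$ is their set, ordered componentwise ($u\preccurlyeq v$ iff $u_i\le v_i$ for all $i$). A $k$-chain of $\mathsf{Tr}(n)$ is a sequence $[u^{(1)},\dots,u^{(k)}]$ of triwords of size $n$ with $u^{(1)}\preccurlyeq\cdots\preccurlyeq u^{(k)}$ (repetitions allowed). For $i\in[0,k]$, $\mathfrak{z}_i(n,k)$ is the number of $k$-chains in which exactly the last $i$ words $u^{(k-i+1)},\dots,u^{(k)}$ do not contain the letter $0$ (and the first $k-i$ do). *)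

theory Defs
  imports Main "HOL-Computational_Algebra.Polynomial"
begin

text \<open>Words are lists of naturals; position i (0-based) corresponds to u_(i+1).\<close>

definition is_triword :: "nat \<Rightarrow> nat list \<Rightarrow> bool" where
  "is_triword n u \<longleftrightarrow> length u = n \<and> set u \<subseteq> {0,1,2}
     \<and> (u \<noteq> [] \<longrightarrow> hd u \<noteq> 2)
     \<and> (\<forall>i j. i < j \<and> j < n \<and> u ! i = 0 \<longrightarrow> u ! j \<noteq> 1)"

definition Tr :: "nat \<Rightarrow> nat list set" where
  "Tr n = {u. is_triword n u}"

definition word_le :: "nat list \<Rightarrow> nat list \<Rightarrow> bool" where
  "word_le u v \<longleftrightarrow> length u = length v \<and> (\<forall>i < length u. u ! i \<le> v ! i)"

definition chains :: "nat \<Rightarrow> nat \<Rightarrow> nat list list set" where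
  "chains n k = {c. length c = k \<and> (\<forall>j < k. c ! j \<in> Tr n)
       \<and> (\<forall>j. Suc j < k \<longrightarrow> word_le (c ! j) (c ! Suc j))}"

definition zeta :: "nat \<Rightarrow> nat \<Rightarrow> nat \<Rightarrow> nat" where
  "zeta i n k = card {c \<in> chains n k.
       (\<forall>j < k. (j < k - i \<longrightarrow> 0 \<in> set (c ! j)) \<and> (k - i \<le> j \<longrightarrow> 0 \<notin> set (c ! j)))}"

end

theory Submission
  imports Defs
begin


lemma downclosed_eq:
  fixes S :: "nat set"
  assumes "finite S" "\<And>i j. i \<le> j \<Longrightarrow> j \<in> S \<Longrightarrow> i \<in> S"
  shows "S = {..<card S}"
proof (cases "S = {}")
  case True then show ?thesis by simp
next
  case False
  have "S = {..Max S}"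
    using assms False by (auto intro: Max_ge Max_in)
  then show ?thesis by (metis card_atMost lessThan_Suc_atMost)
qed

lemma finite_Tr: "finite (Tr n)"
proof -
  have "Tr n \<subseteq> {w. set w \<subseteq> {0,1,2} \<and> length w = n}"
    by (auto simp: Tr_def is_triword_def)
  moreover have "finite {w. set w \<subseteq> {0::nat,1,2} \<and> length w = n}"
    by (rule finite_lists_length_eq) simp
  ultimately show ?thesis by (rule finite_subset)
qed

lemma finite_chains: "finite (chains n k)"
proof -
  have "chains n k \<subseteq> {c. set c \<subseteq> Tr n \<and> length c = k}"
    by (auto simp: chains_def in_set_conv_nth)
  moreover have "finite {c. set c \<subseteq> Tr n \<and> length c = k}"
    by (rule finite_lists_length_eq) (rule finite_Tr)
  ultimately show ?thesis by (rule finite_subset)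
qed

lemma word_le_trans: "word_le u v \<Longrightarrow> word_le v w \<Longrightarrow> word_le u w"
  unfolding word_le_def by (metis le_trans)

lemma word_le_refl: "word_le u u"
  unfolding word_le_def by simp

lemma chain_le:
  assumes "c \<in> chains n k" "i \<le> j" "j < k"
  shows "word_le (c ! i) (c ! j)"
  using assms(2,3)
proof (induction j)
  case 0 then show ?case by (simp add: word_le_refl)
next
  case (Suc j)
  show ?case
  proof (cases "i = Suc j")
    case True then show ?thesis by (simp add: word_le_refl)
  next
    case False
    then have "word_le (c!i) (c!j)" using Suc by simp
    moreover have "word_le (c!j) (c!Suc j)" using assms(1) Suc.prems by (simp add: chains_def)
    ultimately show ?thesis by (rule word_le_trans)
  qed
qed

lemma chain_zero_prefix:
  assumes "c \<in> chains n k" "i \<le> j" "j < k" "0 \<in> set (c ! j)"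
  shows "0 \<in> set (c ! i)"
proof -
  have le: "word_le (c ! i) (c ! j)" using chain_le assms by blast
  from assms(4) obtain p where p: "p < length (c!j)" "c!j!p = 0" by (auto simp: in_set_conv_nth)
  then have "p < length (c!i)" "c!i!p = 0" using le by (auto simp: word_le_def)
  then show ?thesis by (metis nth_mem)
qed

definition Mz :: "nat \<Rightarrow> nat list list \<Rightarrow> nat" where
  "Mz k c = card {j. j < k \<and> 0 \<in> set (c ! j)}"

lemma Mz_set:
  assumes "c \<in> chains n k"
  shows "{j. j < k \<and> 0 \<in> set (c ! j)} = {..<Mz k c}"
  unfolding Mz_def
  by (rule downclosed_eq) (use chain_zero_prefix[OF assms] in auto)

lemma Mz_le: "Mz k c \<le> k"
proof -
  have "{j. j < k \<and> 0 \<in> set (c ! j)} \<subseteq> {..<k}" by auto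
  then show ?thesis unfolding Mz_def by (metis card_lessThan card_mono finite_lessThan)
qed

lemma Mz_iff:
  assumes "c \<in> chains n k" "j < k"
  shows "0 \<in> set (c ! j) \<longleftrightarrow> j < Mz k c"
  using Mz_set[OF assms(1)] assms(2) by blast


lemma triword_snoc:
  "is_triword (Suc n) (w @ [x]) \<longleftrightarrow>
     is_triword n w \<and> x \<in> {0,1,2} \<and> (n = 0 \<longrightarrow> x \<noteq> 2) \<and> (x = 1 \<longrightarrow> 0 \<notin> set w)"
proof
  assume H: "is_triword (Suc n) (w @ [x])"
  then have len: "length w = n" by (simp add: is_triword_def)
  have A: "is_triword n w"
    unfolding is_triword_def
  proof (intro conjI allI impI)
    show "length w = n" by fact
    show "set w \<subseteq> {0,1,2}" using H by (auto simp: is_triword_def)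
    show "hd w \<noteq> 2" if "w \<noteq> []" using H that by (auto simp: is_triword_def)
    fix i j assume ij: "i < j \<and> j < n \<and> w ! i = 0"
    have "(w @ [x]) ! i = w ! i" "(w @ [x]) ! j = w ! j" using ij len by (auto simp: nth_append)
    moreover have "\<forall>i j. i < j \<and> j < Suc n \<and> (w @ [x]) ! i = 0 \<longrightarrow> (w @ [x]) ! j \<noteq> 1"
      using H unfolding is_triword_def by blast
    ultimately show "w ! j \<noteq> 1" using ij by (metis less_SucI)
  qed
  have B: "x = 1 \<longrightarrow> 0 \<notin> set w"
  proof
    assume "x = 1"
    show "0 \<notin> set w"
    proof
      assume "0 \<in> set w"
      then obtain i where "i < n" "w ! i = 0" using len by (auto simp: in_set_conv_nth)
      then show False using H len \<open>x = 1\<close> unfolding is_triword_def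
        by (metis lessI length_append_singleton nth_append nth_append_length)
    qed
  qed
  show "is_triword n w \<and> x \<in> {0,1,2} \<and> (n = 0 \<longrightarrow> x \<noteq> 2) \<and> (x = 1 \<longrightarrow> 0 \<notin> set w)"
    using A B H len by (auto simp: is_triword_def)
next
  assume H: "is_triword n w \<and> x \<in> {0,1,2} \<and> (n = 0 \<longrightarrow> x \<noteq> 2) \<and> (x = 1 \<longrightarrow> 0 \<notin> set w)"
  then have len: "length w = n" by (simp add: is_triword_def)
  show "is_triword (Suc n) (w @ [x])"
    unfolding is_triword_def
  proof (intro conjI allI impI)
    show "length (w @ [x]) = Suc n" using len by simp
    show "set (w @ [x]) \<subseteq> {0,1,2}" using H by (auto simp: is_triword_def)
    show "hd (w @ [x]) \<noteq> 2" using H len by (cases w) (auto simp: is_triword_def)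
    fix i j assume ij: "i < j \<and> j < Suc n \<and> (w @ [x]) ! i = 0"
    show "(w @ [x]) ! j \<noteq> 1"
    proof (cases "j < n")
      case True
      then show ?thesis using H ij len by (auto simp: is_triword_def nth_append)
    next
      case False
      then have "j = n" using ij by simp
      moreover have "w ! i = 0" "i < n" using ij len \<open>j = n\<close> by (auto simp: nth_append)
      ultimately show ?thesis using H len by (auto simp: nth_append) (metis nth_mem)
    qed
  qed
qed

lemma Tr_snoc: "w @ [x] \<in> Tr (Suc n) \<longleftrightarrow>
     w \<in> Tr n \<and> x \<in> {0,1,2} \<and> (n = 0 \<longrightarrow> x \<noteq> 2) \<and> (x = 1 \<longrightarrow> 0 \<notin> set w)"
  by (simp add: Tr_def triword_snoc)

lemma word_le_snoc: "length u = length v \<Longrightarrow>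
   word_le (u @ [x]) (v @ [y]) \<longleftrightarrow> word_le u v \<and> x \<le> y"
proof
  assume L: "length u = length v" and H: "word_le (u @ [x]) (v @ [y])"
  have "u ! i \<le> v ! i" if "i < length u" for i
    using H that L unfolding word_le_def
    by (metis length_append_singleton less_SucI nth_append)
  moreover have "x \<le> y" using H L unfolding word_le_def
    by (metis length_append_singleton lessI nth_append_length)
  ultimately show "word_le u v \<and> x \<le> y" using L by (simp add: word_le_def)
next
  assume L: "length u = length v" and H: "word_le u v \<and> x \<le> y"
  show "word_le (u @ [x]) (v @ [y])" unfolding word_le_def
  proof (intro conjI allI impI)
    show "length (u @ [x]) = length (v @ [y])" using L by simp
    fix i assume "i < length (u @ [x])"
    then show "(u @ [x]) ! i \<le> (v @ [y]) ! i" using H L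
      by (cases "i < length u") (auto simp: nth_append word_le_def)
  qed
qed

definition xcol :: "nat \<Rightarrow> nat \<Rightarrow> nat \<Rightarrow> nat" where
  "xcol a b m = (if m < a then 0 else if m < a + b then 1 else 2)"

definition ext :: "nat \<Rightarrow> nat list list \<Rightarrow> nat \<Rightarrow> nat \<Rightarrow> nat list list" where
  "ext k c a b = map (\<lambda>m. c ! m @ [xcol a b m]) [0..<k]"

lemma Tr_len: "w \<in> Tr n \<Longrightarrow> length w = n"
  by (simp add: Tr_def is_triword_def)



lemma chains_len: "c \<in> chains n k \<Longrightarrow> j < k \<Longrightarrow> length (c ! j) = n"
  by (simp add: chains_def Tr_len)

lemma ext_nth: "j < k \<Longrightarrow> ext k c a b ! j = c ! j @ [xcol a b j]"
  by (simp add: ext_def)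

lemma length_ext[simp]: "length (ext k c a b) = k"
  by (simp add: ext_def)

lemma xcol_mono: "i \<le> j \<Longrightarrow> xcol a b i \<le> xcol a b j"
  by (simp add: xcol_def)

lemma ext_chains:
  assumes ab: "a + b \<le> k" and lc: "length c = k"
  shows "ext k c a b \<in> chains (Suc n) k \<longleftrightarrow>
     c \<in> chains n k \<and> (n = 0 \<longrightarrow> a + b = k) \<and> (b = 0 \<or> Mz k c \<le> a)"
proof
  assume H: "ext k c a b \<in> chains (Suc n) k"
  have tr: "c ! j \<in> Tr n \<and> xcol a b j \<in> {0,1,2} \<and> (n = 0 \<longrightarrow> xcol a b j \<noteq> 2)
      \<and> (xcol a b j = 1 \<longrightarrow> 0 \<notin> set (c ! j))" if "j < k" for j
    using H that by (simp add: chains_def ext_nth Tr_snoc del: insert_iff)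
  have le: "word_le (c ! j) (c ! Suc j)" if "Suc j < k" for j
  proof -
    have "word_le (ext k c a b ! j) (ext k c a b ! Suc j)" using H that by (simp add: chains_def)
    moreover have "length (c ! j) = length (c ! Suc j)" using tr[of j] tr[of "Suc j"] that Tr_len
      by (metis Suc_lessD)
    ultimately show ?thesis using that by (simp add: ext_nth word_le_snoc)
  qed
  have C: "c \<in> chains n k" using lc tr le by (simp add: chains_def)
  have D: "n = 0 \<longrightarrow> a + b = k"
  proof
    assume "n = 0"
    show "a + b = k"
    proof (rule ccontr)
      assume "a + b \<noteq> k"
      then have "a + b < k" using ab by simp
      then have "xcol a b (a + b) = 2" by (simp add: xcol_def)
      then show False using tr[of "a+b"] \<open>a + b < k\<close> \<open>n = 0\<close> by simp
    qed
  qed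
  have E: "b = 0 \<or> Mz k c \<le> a"
  proof (rule ccontr)
    assume "\<not> (b = 0 \<or> Mz k c \<le> a)"
    then have "b > 0" "a < Mz k c" by auto
    then have "a < k" using Mz_le[of k c] by simp
    have "xcol a b a = 1" using \<open>b > 0\<close> by (simp add: xcol_def)
    then have "0 \<notin> set (c ! a)" using tr[OF \<open>a < k\<close>] by simp
    moreover have "0 \<in> set (c ! a)" using Mz_iff[OF C \<open>a < k\<close>] \<open>a < Mz k c\<close> by simp
    ultimately show False by simp
  qed
  show "c \<in> chains n k \<and> (n = 0 \<longrightarrow> a + b = k) \<and> (b = 0 \<or> Mz k c \<le> a)"
    using C D E by simp
next
  assume H: "c \<in> chains n k \<and> (n = 0 \<longrightarrow> a + b = k) \<and> (b = 0 \<or> Mz k c \<le> a)"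
  have tr: "ext k c a b ! j \<in> Tr (Suc n)" if "j < k" for j
  proof -
    have "c ! j \<in> Tr n" using H that by (simp add: chains_def)
    moreover have "xcol a b j \<in> {0,1,2}" by (simp add: xcol_def)
    moreover have "n = 0 \<longrightarrow> xcol a b j \<noteq> 2" using H that by (simp add: xcol_def)
    moreover have "xcol a b j = 1 \<longrightarrow> 0 \<notin> set (c ! j)"
    proof
      assume "xcol a b j = 1"
      then have "a \<le> j" "b \<noteq> 0" by (auto simp: xcol_def split: if_splits)
      then have "Mz k c \<le> j" using H by simp
      then show "0 \<notin> set (c ! j)" using Mz_iff[of c n k j] H that by simp
    qed
    ultimately show ?thesis using that by (simp add: ext_nth Tr_snoc del: insert_iff)
  qed
  have le: "word_le (ext k c a b ! j) (ext k c a b ! Suc j)" if "Suc j < k" for j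
  proof -
    have "word_le (c ! j) (c ! Suc j)" using H that by (simp add: chains_def)
    moreover have "length (c ! j) = length (c ! Suc j)"
      using H that chains_len[of c n k] by (metis Suc_lessD lessI)
    ultimately show ?thesis using that by (simp add: ext_nth word_le_snoc xcol_mono)
  qed
  show "ext k c a b \<in> chains (Suc n) k" using tr le by (simp add: chains_def)
qed



lemma Mz_ext:
  assumes "c \<in> chains n k" "a \<le> k"
  shows "Mz k (ext k c a b) = max (Mz k c) a"
proof -
  have "{j. j < k \<and> 0 \<in> set (ext k c a b ! j)} = {j. j < k \<and> (0 \<in> set (c ! j) \<or> j < a)}"
    by (auto simp: ext_nth xcol_def split: if_splits)
  also have "\<dots> = {j. j < k \<and> (j < Mz k c \<or> j < a)}"
    using Mz_iff[OF assms(1)] by auto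
  also have "\<dots> = {..<max (Mz k c) a}"
    using Mz_le[of k c] assms(2) by auto
  finally show ?thesis unfolding Mz_def by simp
qed

lemma xcol_inj:
  assumes "a + b \<le> k" "a' + b' \<le> k" "\<forall>m<k. xcol a b m = xcol a' b' m"
  shows "a = a' \<and> b = b'"
proof -
  have "a = a'"
  proof (rule ccontr)
    assume "a \<noteq> a'"
    then have "min a a' < k" "xcol a b (min a a') \<noteq> xcol a' b' (min a a')"
      using assms(1,2) by (auto simp: xcol_def min_def)
    then show False using assms(3) by blast
  qed
  moreover have "a + b = a' + b'"
  proof (rule ccontr)
    assume "a + b \<noteq> a' + b'"
    then have "min (a+b) (a'+b') < k" "xcol a b (min (a+b) (a'+b')) \<noteq> xcol a' b' (min (a+b) (a'+b'))"
      using assms(1,2) \<open>a = a'\<close> by (auto simp: xcol_def min_def)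
    then show False using assms(3) by blast
  qed
  ultimately show ?thesis by simp
qed

lemma ext_inj:
  assumes "a + b \<le> k" "a' + b' \<le> k" "length c = k" "length c' = k"
    "ext k c a b = ext k c' a' b'"
  shows "c = c' \<and> a = a' \<and> b = b'"
proof -
  have E: "c ! m @ [xcol a b m] = c' ! m @ [xcol a' b' m]" if "m < k" for m
    using assms(5) ext_nth[OF that] by metis
  have "c = c'" using E assms(3,4) by (intro nth_equalityI) auto
  moreover have "a = a' \<and> b = b'" by (rule xcol_inj[OF assms(1,2)]) (use E in auto)
  ultimately show ?thesis by simp
qed

lemma ext_surj:
  assumes H: "c' \<in> chains (Suc n) k"
  shows "\<exists>a b. a + b \<le> k \<and> c' = ext k (map butlast c') a b"
proof -
  define col where "col m = last (c' ! m)" for m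
  have lenk: "length c' = k" using H by (simp add: chains_def)
  have dec: "c' ! m = butlast (c' ! m) @ [col m]" if "m < k" for m
    using chains_len[OF H that] unfolding col_def
    by (metis append_butlast_last_id list.size(3) nat.distinct(1))
  have col2: "col m \<le> 2" if "m < k" for m
  proof -
    have "c' ! m \<in> Tr (Suc n)" using H that by (simp add: chains_def)
    then have "set (c' ! m) \<subseteq> {0,1,2}" "c' ! m \<noteq> []" by (auto simp: Tr_def is_triword_def)
    then show ?thesis unfolding col_def using last_in_set by fastforce
  qed
  have mono: "col i \<le> col j" if "i \<le> j" "j < k" for i j
  proof -
    have "word_le (c' ! i) (c' ! j)" using chain_le[OF H that] .
    moreover have "length (c' ! i) = Suc n" "length (c' ! j) = Suc n"
      using chains_len[OF H] that by auto
    ultimately have "c' ! i ! n \<le> c' ! j ! n" by (simp add: word_le_def)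
    then show ?thesis unfolding col_def
      using \<open>length (c' ! i) = Suc n\<close> \<open>length (c' ! j) = Suc n\<close> by (metis diff_Suc_1 last_conv_nth list.size(3) nat.distinct(1))
  qed
  define A0 where "A0 = {m. m < k \<and> col m = 0}"
  define A1 where "A1 = {m. m < k \<and> col m \<le> 1}"
  have A0: "A0 = {..<card A0}" unfolding A0_def
    by (rule downclosed_eq) (auto dest: mono)
  have A1: "A1 = {..<card A1}" unfolding A1_def
    by (rule downclosed_eq) (auto dest: mono)
  have "A0 \<subseteq> A1" "A1 \<subseteq> {..<k}" unfolding A0_def A1_def by auto
  then have le: "card A0 \<le> card A1" "card A1 \<le> k"
    by (metis A0 A1 card_mono finite_lessThan card_lessThan)+
  define a where "a = card A0"
  define b where "b = card A1 - card A0"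
  have "col m = xcol a b m" if "m < k" for m
  proof -
    have "col m = 0 \<longleftrightarrow> m < a" using A0 that unfolding A0_def a_def by blast
    moreover have "col m \<le> 1 \<longleftrightarrow> m < a + b" using A1 that le unfolding A1_def a_def b_def by auto
    ultimately show ?thesis using col2[OF that] unfolding xcol_def by auto
  qed
  then have "c' = ext k (map butlast c') a b"
    using dec lenk by (intro nth_equalityI) (auto simp: ext_nth)
  moreover have "a + b \<le> k" using le unfolding a_def b_def by simp
  ultimately show ?thesis by blast
qed



definition W :: "nat \<Rightarrow> nat \<Rightarrow> nat \<Rightarrow> nat \<Rightarrow> (nat \<times> nat) set" where
  "W n k M M' = {(a,b). a + b \<le> k \<and> (b = 0 \<or> M \<le> a) \<and> (n = 0 \<longrightarrow> a + b = k) \<and> max M a = M'}"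

definition S :: "nat \<Rightarrow> nat \<Rightarrow> nat \<Rightarrow> nat list list set" where
  "S n k M = {c \<in> chains n k. Mz k c = M}"

lemma finite_W: "finite (W n k M M')"
proof -
  have "W n k M M' \<subseteq> {..k} \<times> {..k}" by (auto simp: W_def)
  then show ?thesis by (rule finite_subset) simp
qed

lemma S_Suc_eq:
  "S (Suc n) k M' = (\<lambda>(c, ab). ext k c (fst ab) (snd ab)) ` (Sigma (chains n k) (\<lambda>c. W n k (Mz k c) M'))"
proof
  show "S (Suc n) k M' \<subseteq> (\<lambda>(c, ab). ext k c (fst ab) (snd ab)) ` (Sigma (chains n k) (\<lambda>c. W n k (Mz k c) M'))"
  proof
    fix c' assume "c' \<in> S (Suc n) k M'"
    then have c': "c' \<in> chains (Suc n) k" "Mz k c' = M'" by (auto simp: S_def)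
    obtain a b where ab: "a + b \<le> k" "c' = ext k (map butlast c') a b"
      using ext_surj[OF c'(1)] by blast
    define c where "c = map butlast c'"
    have lc: "length c = k" using c'(1) by (simp add: c_def chains_def)
    have cc: "c \<in> chains n k \<and> (n = 0 \<longrightarrow> a + b = k) \<and> (b = 0 \<or> Mz k c \<le> a)"
      using ext_chains[OF ab(1) lc, of n] c'(1) ab(2) by (simp add: c_def)
    have "Mz k c' = max (Mz k c) a" using Mz_ext[of c n k a b] cc ab by (simp add: c_def)
    then have "(a, b) \<in> W n k (Mz k c) M'" using cc ab c'(2) by (auto simp: W_def)
    then show "c' \<in> (\<lambda>(c, ab). ext k c (fst ab) (snd ab)) ` (Sigma (chains n k) (\<lambda>c. W n k (Mz k c) M'))"
      using cc ab(2) unfolding c_def by (intro image_eqI[of _ _ "(c, (a, b))"]) (auto simp: c_def)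
  qed
next
  show "(\<lambda>(c, ab). ext k c (fst ab) (snd ab)) ` (Sigma (chains n k) (\<lambda>c. W n k (Mz k c) M')) \<subseteq> S (Suc n) k M'"
  proof clarify
    fix c a b assume H: "c \<in> chains n k" "(a, b) \<in> W n k (Mz k c) M'"
    have lc: "length c = k" using H by (simp add: chains_def)
    have ab: "a + b \<le> k" "(n = 0 \<longrightarrow> a + b = k)" "(b = 0 \<or> Mz k c \<le> a)" "max (Mz k c) a = M'"
      using H(2) by (auto simp: W_def)
    have "ext k c a b \<in> chains (Suc n) k" using ext_chains[OF ab(1) lc] H ab by simp
    moreover have "Mz k (ext k c a b) = M'" using Mz_ext[OF H(1), of a b] ab by simp
    ultimately show "ext k c (fst (a, b)) (snd (a, b)) \<in> S (Suc n) k M'" by (simp add: S_def)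
  qed
qed

lemma card_S_Suc:
  "card (S (Suc n) k M') = (\<Sum>c\<in>chains n k. card (W n k (Mz k c) M'))"
proof -
  have inj: "inj_on (\<lambda>(c, ab). ext k c (fst ab) (snd ab)) (Sigma (chains n k) (\<lambda>c. W n k (Mz k c) M'))"
    unfolding inj_on_def
    by (auto simp: W_def chains_def dest!: ext_inj[rotated 4])
  have "card (S (Suc n) k M') = card (Sigma (chains n k) (\<lambda>c. W n k (Mz k c) M'))"
    unfolding S_Suc_eq by (rule card_image[OF inj])
  also have "\<dots> = (\<Sum>c\<in>chains n k. card (W n k (Mz k c) M'))"
    by (rule card_SigmaI) (auto simp: finite_chains finite_W)
  finally show ?thesis .
qed

lemma card_S_Suc2:
  "card (S (Suc n) k M') = (\<Sum>M\<le>k. card (S n k M) * card (W n k M M'))"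
proof -
  have "(\<Sum>c\<in>chains n k. card (W n k (Mz k c) M')) =
        (\<Sum>M\<le>k. \<Sum>c\<in>{c \<in> chains n k. Mz k c = M}. card (W n k (Mz k c) M'))"
    by (rule sum.group[symmetric]) (auto simp: finite_chains Mz_le)
  also have "\<dots> = (\<Sum>M\<le>k. card (S n k M) * card (W n k M M'))"
    by (rule sum.cong) (auto simp: S_def)
  finally show ?thesis using card_S_Suc by simp
qed

lemma card_W_Suc:
  assumes "M \<le> k" "M' \<le> k"
  shows "card (W (Suc n) k M M') = (if M' = M then k + 1 else if M < M' then k + 1 - M' else 0)"
proof (cases "M' = M")
  case True
  have "W (Suc n) k M M' = (\<lambda>a. (a, 0)) ` {..M} \<union> (\<lambda>b. (M, b)) ` {1..k-M}"
    using True assms by (auto simp: W_def image_iff)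
  moreover have "card ((\<lambda>a. (a, 0::nat)) ` {..M}) = M + 1"
    by (subst card_image) (auto simp: inj_on_def)
  moreover have "card ((\<lambda>b. (M, b)) ` {1..k-M}) = k - M"
    by (subst card_image) (auto simp: inj_on_def)
  moreover have "(\<lambda>a. (a, 0::nat)) ` {..M} \<inter> (\<lambda>b. (M, b)) ` {1..k-M} = {}" by auto
  ultimately have "card (W (Suc n) k M M') = M + 1 + (k - M)"
    by (simp add: card_Un_disjoint)
  then show ?thesis using True assms by simp
next
  case False
  show ?thesis
  proof (cases "M < M'")
    case True
    have "W (Suc n) k M M' = (\<lambda>b. (M', b)) ` {..k-M'}"
      using True assms by (auto simp: W_def image_iff)
    moreover have "card ((\<lambda>b. (M', b)) ` {..k-M'}) = k - M' + 1"
      by (subst card_image) (auto simp: inj_on_def)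
    ultimately show ?thesis using True False assms by simp
  next
    case F2: False
    have "W (Suc n) k M M' = {}" using False F2 by (auto simp: W_def)
    then show ?thesis using False F2 by simp
  qed
qed

lemma chains_0: "chains 0 k = {replicate k []}"
  by (auto simp: chains_def Tr_def is_triword_def word_le_def intro!: nth_equalityI)

lemma Mz_0: "Mz k (replicate k []) = 0"
proof -
  have "{j. j < k \<and> 0 \<in> set (replicate k [] ! j)} = {}" by auto
  then show ?thesis by (simp add: Mz_def)
qed

lemma card_S_1:
  assumes "M' \<le> k"
  shows "card (S 1 k M') = 1"
proof -
  have "card (S (Suc 0) k M') = (\<Sum>c\<in>chains 0 k. card (W 0 k (Mz k c) M'))"
    by (rule card_S_Suc)
  also have "\<dots> = card (W 0 k 0 M')" by (simp add: chains_0 Mz_0)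
  also have "W 0 k 0 M' = {(M', k - M')}" using assms by (auto simp: W_def)
  finally show ?thesis by simp
qed



lemma card_S_rec:
  assumes "M' \<le> k"
  shows "(of_nat (card (S (Suc (Suc m)) k M')) :: rat) =
     of_nat (k+1) * of_nat (card (S (Suc m) k M')) +
     of_nat (k + 1 - M') * (\<Sum>M<M'. of_nat (card (S (Suc m) k M)))"
proof -
  have "(of_nat (card (S (Suc (Suc m)) k M')) :: rat) =
     (\<Sum>M\<le>k. of_nat (card (S (Suc m) k M)) * of_nat (card (W (Suc m) k M M')))"
    by (simp add: card_S_Suc2[of "Suc m"])
  also have "\<dots> = (\<Sum>M\<le>k. of_nat (card (S (Suc m) k M)) *
        (if M' = M then of_nat (k + 1) else if M < M' then of_nat (k + 1 - M') else 0))"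
    (is "_ = (\<Sum>M\<le>k. ?f M)")
    using assms by (intro sum.cong refl) (simp add: card_W_Suc)
  also have "\<dots> = (\<Sum>M\<in>({M'} \<union> {..<M'}) \<union> {M'<..k}. ?f M)"
    using assms by (intro sum.cong) auto
  also have "\<dots> = (\<Sum>M\<in>{M'} \<union> {..<M'}. ?f M) + (\<Sum>M\<in>{M'<..k}. ?f M)"
    by (rule sum.union_disjoint) auto
  also have "(\<Sum>M\<in>{M'<..k}. ?f M) = 0" by (rule sum.neutral) auto
  also have "(\<Sum>M\<in>{M'} \<union> {..<M'}. ?f M) = ?f M' + (\<Sum>M<M'. ?f M)"
    by (subst sum.union_disjoint) auto
  also have "(\<Sum>M<M'. ?f M) = (\<Sum>M<M'. of_nat (card (S (Suc m) k M)) * of_nat (k + 1 - M'))"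
    by (intro sum.cong) auto
  finally show ?thesis by (simp add: sum_distrib_left mult.commute)
qed

fun aa :: "nat \<Rightarrow> nat \<Rightarrow> nat \<Rightarrow> rat" where
  "aa k 0 M = 1"
| "aa k (Suc j) M = of_nat (k + 1 - M) * (\<Sum>M0<M. aa k j M0)"

lemma aa_zero: "M < j \<Longrightarrow> aa k j M = 0"
proof (induction j arbitrary: M)
  case 0 then show ?case by simp
next
  case (Suc j)
  have "(\<Sum>M0<M. aa k j M0) = 0" using Suc by (intro sum.neutral) auto
  then show ?case by simp
qed

lemma aa_diag: "j \<le> k \<Longrightarrow> aa k j j * of_nat (fact (k - j)) = of_nat (fact k)"
proof (induction j)
  case 0 then show ?case by simp
next
  case (Suc j)
  have s: "(\<Sum>M0<Suc j. aa k j M0) = aa k j j"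
    by (simp add: aa_zero)
  have kj: "k - j = Suc (k - Suc j)" using Suc.prems by simp
  have f: "(of_nat (fact (k - j)) :: rat) = of_nat (k - j) * of_nat (fact (k - Suc j))"
    by (simp only: kj fact_Suc of_nat_mult of_nat_id)
  have a: "aa k (Suc j) (Suc j) = of_nat (k - j) * aa k j j"
    using s by simp
  have "aa k (Suc j) (Suc j) * of_nat (fact (k - Suc j)) = aa k j j * of_nat (fact (k - j))"
    unfolding a f by (simp only: mult_ac)
  then show ?case using Suc by simp
qed

lemma pascal_sum:
  fixes f :: "nat \<Rightarrow> rat"
  shows "(\<Sum>j\<le>k. of_nat (Suc m choose j) * f j) =
     (\<Sum>j\<le>k. of_nat (m choose j) * f j) + (\<Sum>j<k. of_nat (m choose j) * f (Suc j))"
  by (induction k) (simp_all add: algebra_simps)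

lemma S_formula:
  assumes "M \<le> k"
  shows "(of_nat (card (S (Suc m) k M)) :: rat) * of_nat (k+1) ^ k =
     (\<Sum>j\<le>k. of_nat (m choose j) * of_nat (k+1) ^ (m + k - j) * aa k j M)"
  using assms
proof (induction m arbitrary: M)
  case 0
  have "(\<Sum>j\<le>k. of_nat (0 choose j) * of_nat (k+1) ^ (0 + k - j) * aa k j M) =
        (\<Sum>j\<in>{0}. of_nat (0 choose j) * of_nat (k+1) ^ (0 + k - j) * aa k j M :: rat)"
    by (intro sum.mono_neutral_right) auto
  then show ?case using card_S_1[OF 0(1)] by simp
next
  case (Suc m)
  define K :: rat where "K = of_nat (k+1)"
  define R where "R M = (\<Sum>j\<le>k. of_nat (m choose j) * K ^ (m + k - j) * aa k j M)" for M
  have IH: "of_nat (card (S (Suc m) k M0)) * K ^ k = R M0" if "M0 \<le> k" for M0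
    using Suc.IH[OF that] by (simp add: K_def R_def)
  have "of_nat (card (S (Suc (Suc m)) k M)) * K ^ k =
     K * (of_nat (card (S (Suc m) k M)) * K ^ k) +
     of_nat (k + 1 - M) * (\<Sum>M0<M. of_nat (card (S (Suc m) k M0)) * K ^ k)"
  proof -
    have eq: "of_nat (card (S (Suc (Suc m)) k M)) * K ^ k = (K * of_nat (card (S (Suc m) k M)) +
      of_nat (k + 1 - M) * (\<Sum>M0<M. of_nat (card (S (Suc m) k M0)))) * K ^ k"
      using card_S_rec[OF Suc.prems, where m=m] by (simp add: K_def)
    show ?thesis unfolding eq by (simp add: sum_distrib_right ring_distribs mult.assoc)
  qed
  also have "\<dots> = K * R M + of_nat (k + 1 - M) * (\<Sum>M0<M. R M0)"
    using IH Suc.prems by simp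
  also have "\<dots> = (\<Sum>j\<le>k. of_nat (Suc m choose j) * K ^ (Suc m + k - j) * aa k j M)"
  proof -
    have A: "(\<Sum>j\<le>k. of_nat (Suc m choose j) * K ^ (Suc m + k - j) * aa k j M) =
       (\<Sum>j\<le>k. of_nat (m choose j) * (K ^ (Suc m + k - j) * aa k j M)) +
       (\<Sum>j<k. of_nat (m choose j) * (K ^ (Suc m + k - Suc j) * aa k (Suc j) M))"
      using pascal_sum[where k=k and m=m and f="\<lambda>j. K ^ (Suc m + k - j) * aa k j M"] by (simp add: mult.assoc)
    have B: "(\<Sum>j\<le>k. of_nat (m choose j) * (K ^ (Suc m + k - j) * aa k j M)) = K * R M"
      unfolding R_def sum_distrib_left
      by (intro sum.cong refl) (simp add: Suc_diff_le algebra_simps)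
    have C: "(\<Sum>j<k. of_nat (m choose j) * (K ^ (Suc m + k - Suc j) * aa k (Suc j) M)) =
       of_nat (k + 1 - M) * (\<Sum>M0<M. R M0)"
    proof -
      have "(\<Sum>j<k. of_nat (m choose j) * (K ^ (Suc m + k - Suc j) * aa k (Suc j) M)) =
         of_nat (k + 1 - M) * (\<Sum>M0<M. \<Sum>j<k. of_nat (m choose j) * K ^ (m + k - j) * aa k j M0)"
        by (simp add: sum_distrib_left sum_distrib_right algebra_simps sum.swap[of _ "{..<M}"])
      also have "(\<Sum>M0<M. \<Sum>j<k. of_nat (m choose j) * K ^ (m + k - j) * aa k j M0) = (\<Sum>M0<M. R M0)"
      proof (intro sum.cong refl)
        fix M0 assume "M0 \<in> {..<M}"
        then have "M0 < k" using Suc.prems by simp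
        then show "(\<Sum>j<k. of_nat (m choose j) * K ^ (m + k - j) * aa k j M0) = R M0"
          unfolding R_def by (simp add: lessThan_Suc_atMost[symmetric] aa_zero)
      qed
      finally show ?thesis .
    qed
    show ?thesis using A B C by simp
  qed
  finally show ?case by (simp add: K_def)
qed



lemma card_chains_sum: "card (chains n k) = (\<Sum>M\<le>k. card (S n k M))"
proof -
  have "card (chains n k) = (\<Sum>c\<in>chains n k. 1)" by simp
  also have "\<dots> = (\<Sum>M\<le>k. \<Sum>c\<in>{c \<in> chains n k. Mz k c = M}. 1)"
    by (rule sum.group[symmetric]) (auto simp: finite_chains Mz_le)
  also have "\<dots> = (\<Sum>M\<le>k. card (S n k M))" by (simp add: S_def)
  finally show ?thesis .
qed

lemma zeta_S:
  assumes "i \<le> k"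
  shows "zeta i n k = card (S n k (k - i))"
proof -
  have "{c \<in> chains n k. (\<forall>j < k. (j < k - i \<longrightarrow> 0 \<in> set (c ! j)) \<and> (k - i \<le> j \<longrightarrow> 0 \<notin> set (c ! j)))}
      = S n k (k - i)"
  proof (rule set_eqI, rule iffI)
    fix c assume "c \<in> {c \<in> chains n k. (\<forall>j < k. (j < k - i \<longrightarrow> 0 \<in> set (c ! j)) \<and> (k - i \<le> j \<longrightarrow> 0 \<notin> set (c ! j)))}"
    then have c: "c \<in> chains n k" and H: "\<forall>j < k. (j < k - i \<longrightarrow> 0 \<in> set (c ! j)) \<and> (k - i \<le> j \<longrightarrow> 0 \<notin> set (c ! j))"
      by auto
    have H2: "\<forall>j<k. (j < Mz k c \<longleftrightarrow> j < k - i)" using H Mz_iff[OF c] by (meson not_le)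
    have "Mz k c = k - i"
    proof (rule ccontr)
      assume "Mz k c \<noteq> k - i"
      then consider "Mz k c < k - i" | "k - i < Mz k c" by linarith
      then show False
      proof cases
        case 1 then have "Mz k c < k" by linarith
        then show False using 1 H2[rule_format, of "Mz k c"] by simp
      next
        case 2 then show False using H2[rule_format, of "k - i"] Mz_le[of k c] by simp
      qed
    qed
    then show "c \<in> S n k (k - i)" using c by (simp add: S_def)
  next
    fix c assume "c \<in> S n k (k - i)"
    then have c: "c \<in> chains n k" "Mz k c = k - i" by (auto simp: S_def)
    then show "c \<in> {c \<in> chains n k. (\<forall>j < k. (j < k - i \<longrightarrow> 0 \<in> set (c ! j)) \<and> (k - i \<le> j \<longrightarrow> 0 \<notin> set (c ! j)))}"
      using Mz_iff[OF c(1)] by auto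
  qed
  then show ?thesis unfolding zeta_def by simp
qed

lemma sum_zeta: "(\<Sum>i = 0..k. zeta i n k) = card (chains n k)"
proof -
  have "(\<Sum>i = 0..k. zeta i n k) = (\<Sum>i = 0..k. card (S n k (k - i)))"
    by (intro sum.cong refl) (simp add: zeta_S)
  also have "\<dots> = (\<Sum>M\<le>k. card (S n k M))"
    by (rule sum.reindex_bij_witness[of _ "\<lambda>M. k - M" "\<lambda>i. k - i"]) auto
  finally show ?thesis by (simp add: card_chains_sum)
qed

definition Bp :: "nat \<Rightarrow> rat poly" where
  "Bp j = (\<Prod>i<j. [:- (1 + of_nat i), 1:])"

lemma poly_Bp: "poly (Bp j) (of_nat (Suc m)) = of_nat (m choose j) * fact j"
proof -
  have "poly (Bp j) (of_nat (Suc m)) = (\<Prod>i<j. (of_nat m - of_nat i :: rat))"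
    by (simp add: Bp_def poly_prod algebra_simps)
  also have "\<dots> = (of_nat m gchoose j) * fact j"
    by (simp add: gbinomial_prod_rev atLeast0LessThan)
  finally show ?thesis by (simp add: binomial_gbinomial)
qed

lemma Bp_deg: "degree (Bp j) = j \<and> lead_coeff (Bp j) = 1"
proof (induction j)
  case 0 then show ?case by (simp add: Bp_def)
next
  case (Suc j)
  define q :: "rat poly" where "q = [:- (1 + of_nat j), 1:]"
  have e: "Bp (Suc j) = Bp j * q" by (simp add: Bp_def q_def)
  have nz: "Bp j \<noteq> 0" using Suc by auto
  have q: "degree q = 1" "lead_coeff q = 1" "q \<noteq> 0" by (simp_all add: q_def)
  have d: "degree (Bp j * q) = Suc j" using Suc.IH degree_mult_eq[OF nz q(3)] q(1) by simp
  have "lead_coeff (Bp j * q) = lead_coeff (Bp j) * lead_coeff q" by (rule lead_coeff_mult)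
  also have "\<dots> = 1" using Suc.IH q(2) by (metis mult_1)
  finally show ?case unfolding e using d by simp
qed



lemma s_top: "(\<Sum>M\<le>k. aa k k M) = fact k"
proof -
  have "(\<Sum>M\<le>k. aa k k M) = (\<Sum>M<Suc k. aa k k M)" by (simp add: lessThan_Suc_atMost)
  also have "\<dots> = (\<Sum>M<k. aa k k M) + aa k k k" by simp
  also have "(\<Sum>M<k. aa k k M) = 0" by (intro sum.neutral) (auto simp: aa_zero)
  also have "aa k k k = fact k" using aa_diag[of k k] by simp
  finally show ?thesis by simp
qed

theorem proposition3p7:
  fixes k :: nat
  assumes "k \<ge> 1"
  shows "\<exists>P :: rat poly. lead_coeff P = 1 \<and> degree P = k \<and>
    (\<forall>n \<ge> 2.
       of_nat (card (chains n k)) = (of_nat (k + 1) :: rat) powi (int n - int (k + 1)) * poly P (of_nat n)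
     \<and> of_nat (\<Sum>i = 0..k. zeta i n k) = (of_nat (k + 1) :: rat) powi (int n - int (k + 1)) * poly P (of_nat n))"
proof -
  define K :: rat where "K = of_nat (k + 1)"
  have K0: "K \<noteq> 0" by (simp add: K_def)
  define s where "s j = (\<Sum>M\<le>k. aa k j M)" for j
  define c where "c j = K ^ (k - j) * s j / fact j" for j
  define P where "P = (\<Sum>j\<le>k. smult (c j) (Bp j))"
  have polyP: "poly P (of_nat (Suc m)) = (\<Sum>j\<le>k. K ^ (k - j) * s j * of_nat (m choose j))" for m
    unfolding P_def c_def poly_sum poly_smult poly_Bp by (intro sum.cong refl) simp
  have cnt: "(of_nat (card (chains (Suc m) k)) :: rat) = K powi (int m - int k) * poly P (of_nat (Suc m))" for m
  proof -
    have "(of_nat (card (chains (Suc m) k)) :: rat) * K ^ k =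
        (\<Sum>M\<le>k. of_nat (card (S (Suc m) k M)) * K ^ k)"
      by (simp add: card_chains_sum sum_distrib_right)
    also have "\<dots> = (\<Sum>M\<le>k. \<Sum>j\<le>k. of_nat (m choose j) * K ^ (m + k - j) * aa k j M)"
      unfolding K_def by (intro sum.cong refl S_formula) simp
    also have "\<dots> = (\<Sum>j\<le>k. of_nat (m choose j) * K ^ (m + k - j) * s j)"
      unfolding s_def sum_distrib_left by (rule sum.swap)
    also have "\<dots> = K ^ m * (\<Sum>j\<le>k. K ^ (k - j) * s j * of_nat (m choose j))"
      unfolding sum_distrib_left
      by (intro sum.cong refl) (simp add: power_add[symmetric])
    also have "\<dots> = K ^ m * poly P (of_nat (Suc m))" by (simp only: polyP)
    finally have "(of_nat (card (chains (Suc m) k)) :: rat) = K ^ m / K ^ k * poly P (of_nat (Suc m))"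
      using K0 by (simp add: field_simps)
    moreover have "K powi (int m - int k) = K ^ m / K ^ k"
      using K0 by (simp add: power_int_diff)
    ultimately show ?thesis by simp
  qed
  have deg: "degree P = k \<and> lead_coeff P = 1"
  proof -
    have "P = (\<Sum>j<k. smult (c j) (Bp j)) + smult (c k) (Bp k)"
      unfolding P_def by (simp add: lessThan_Suc_atMost[symmetric])
    moreover have "c k = 1" unfolding c_def s_def using s_top[of k] by simp
    moreover have "degree (\<Sum>j<k. smult (c j) (Bp j)) < k"
      using assms by (intro degree_sum_less) (auto intro: le_less_trans[OF degree_smult_le] simp: Bp_deg)
    ultimately have P: "P = (\<Sum>j<k. smult (c j) (Bp j)) + Bp k"
      and dl: "degree (\<Sum>j<k. smult (c j) (Bp j)) < degree (Bp k)" using Bp_deg[of k] by simp_all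
    show ?thesis unfolding P using degree_add_eq_right[OF dl] lead_coeff_add_le[OF dl] Bp_deg[of k]
      by metis
  qed
  show ?thesis
  proof (intro exI[of _ P] conjI allI impI)
    show "lead_coeff P = 1" "degree P = k" using deg by blast+
    fix n :: nat assume n: "n \<ge> 2"
    then obtain m where m: "n = Suc m" by (cases n) auto
    have e: "int n - int (k + 1) = int m - int k" using m by simp
    show "of_nat (card (chains n k)) = (of_nat (k + 1) :: rat) powi (int n - int (k + 1)) * poly P (of_nat n)"
      using cnt[of m] unfolding e m K_def by simp
    then show "of_nat (\<Sum>i = 0..k. zeta i n k) = (of_nat (k + 1) :: rat) powi (int n - int (k + 1)) * poly P (of_nat n)"
      by (simp add: sum_zeta)
  qed
qed

end
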